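(* Let $\mathbf{A}$ be a countable UL-chain and let $\mathscr{K}_0$ be the class of all finite $\mathbf{A}$-structures $\langle\mathbf{A},\mathbf{M}\rangle$ in the language with a single binary relation symbol $<$ (and no other symbols) such that for all $a,b,c\in M$: (0.1) $\|a<a\|^{\mathbf{A}}_{\mathbf{M}}\ge \bar 1$, and (0.2) $\|(a<b\wedge b<c)\to a<c\|^{\mathbf{A}}_{\mathbf{M}}\ge\bar 1$. Then $\mathscr{K}_0^{\cong}$ is the age of some $\mathbf{A}$-structure.
   Context: A UL-algebra is $\mathbf{A}=\langle A,\wedge,\vee,\&,\to,\bar 0,\bar 1,\bot,\top\rangle$ where $\langle A,\wedge,\vee,\bot,\top\rangle$ is a bounded lattice, $\langle A,\&,\bar 1\rangle$ is a commutative monoid, $a\& b\le c$ iff $b\le a\to c$, and $((a\to b)\wedge\bar 1)\vee((b\to a)\wedge \bar 1)=\bar 1$; a UL-chain is one with linear order. An $\mathbf{A}$-structure for the language $\{<\}$ is a set $M$ with a function $<_{\mathbf{M}}:M^2\to A$; $\|a<b\|^{\mathbf{A}}_{\mathbf{M}}=<_{\mathbf{M}}(a,b)$ and compound quantifier-free formulas are evaluated by the operations of $\mathbf{A}$. A substructure is a subset with the restricted relation; an embedding is an injective map preserving the value of $<$ (hence of all quantifier-free formulas), with the identity on $\mathbf{A}$; an isomorphism is a surjective embedding. $\mathscr{K}^{\cong}$ denotes a class containing exactly one representative of each isomorphism type of members of $\mathscr{K}$. The age of an $\mathbf{A}$-structure is the class, up to isomorphism, of its finitely generated (here: finite) substructures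 and their isomorphic copies. *)

theory Defs
  imports Main "HOL-Library.Countable_Set"
begin

record 'a ul_alg =
  carrier :: "'a set"
  meet :: "'a \<Rightarrow> 'a \<Rightarrow> 'a"
  join :: "'a \<Rightarrow> 'a \<Rightarrow> 'a"
  fus  :: "'a \<Rightarrow> 'a \<Rightarrow> 'a"
  imp  :: "'a \<Rightarrow> 'a \<Rightarrow> 'a"
  zer  :: 'a
  one  :: 'a
  bot  :: 'a
  top  :: 'a

definition ul_le :: "'a ul_alg \<Rightarrow> 'a \<Rightarrow> 'a \<Rightarrow> bool" where
  "ul_le A a b \<longleftrightarrow> meet A a b = a"

definition UL_algebra :: "'a ul_alg \<Rightarrow> bool" where
  "UL_algebra A \<longleftrightarrow>
    (let C = carrier A in
     \<comment> \<open>closure of the carrier under the operations\<close>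
     (\<forall>a\<in>C. \<forall>b\<in>C. meet A a b \<in> C \<and> join A a b \<in> C \<and> fus A a b \<in> C \<and> imp A a b \<in> C) \<and>
     zer A \<in> C \<and> one A \<in> C \<and> bot A \<in> C \<and> top A \<in> C \<and>
     \<comment> \<open>bounded lattice\<close>
     (\<forall>a\<in>C. \<forall>b\<in>C. meet A a b = meet A b a \<and> join A a b = join A b a) \<and>
     (\<forall>a\<in>C. \<forall>b\<in>C. \<forall>c\<in>C. meet A (meet A a b) c = meet A a (meet A b c)
                          \<and> join A (join A a b) c = join A a (join A b c)) \<and>
     (\<forall>a\<in>C. \<forall>b\<in>C. meet A a (join A a b) = a \<and> join A a (meet A a b) = a) \<and>
     (\<forall>a\<in>C. meet A (bot A) a = bot A \<and> meet A (top A) a = a) \<and>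
     \<comment> \<open>commutative monoid\<close>
     (\<forall>a\<in>C. \<forall>b\<in>C. fus A a b = fus A b a) \<and>
     (\<forall>a\<in>C. \<forall>b\<in>C. \<forall>c\<in>C. fus A (fus A a b) c = fus A a (fus A b c)) \<and>
     (\<forall>a\<in>C. fus A (one A) a = a) \<and>
     \<comment> \<open>residuation\<close>
     (\<forall>a\<in>C. \<forall>b\<in>C. \<forall>c\<in>C. ul_le A (fus A a b) c \<longleftrightarrow> ul_le A b (imp A a c)) \<and>
     \<comment> \<open>prelinearity\<close>
     (\<forall>a\<in>C. \<forall>b\<in>C. join A (meet A (imp A a b) (one A)) (meet A (imp A b a) (one A)) = one A))"

definition UL_chain :: "'a ul_alg \<Rightarrow> bool" where
  "UL_chain A \<longleftrightarrow> UL_algebra A \<and>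
     (\<forall>a\<in>carrier A. \<forall>b\<in>carrier A. ul_le A a b \<or> ul_le A b a)"

text \<open>An A-structure for the language with one binary relation symbol: a carrier set M
  together with a map M x M -> carrier A (values outside M are irrelevant).\<close>

definition A_structure :: "'a ul_alg \<Rightarrow> 'b set \<Rightarrow> ('b \<Rightarrow> 'b \<Rightarrow> 'a) \<Rightarrow> bool" where
  "A_structure A M R \<longleftrightarrow> (\<forall>x\<in>M. \<forall>y\<in>M. R x y \<in> carrier A)"

definition is_embedding ::
  "('b \<Rightarrow> 'c) \<Rightarrow> 'b set \<Rightarrow> ('b \<Rightarrow> 'b \<Rightarrow> 'a) \<Rightarrow> 'c set \<Rightarrow> ('c \<Rightarrow> 'c \<Rightarrow> 'a) \<Rightarrow> bool" where
  "is_embedding f M R N S \<longleftrightarrow> inj_on f M \<and> f ` M \<subseteq> N \<and>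
     (\<forall>x\<in>M. \<forall>y\<in>M. S (f x) (f y) = R x y)"

definition is_isomorphism ::
  "('b \<Rightarrow> 'c) \<Rightarrow> 'b set \<Rightarrow> ('b \<Rightarrow> 'b \<Rightarrow> 'a) \<Rightarrow> 'c set \<Rightarrow> ('c \<Rightarrow> 'c \<Rightarrow> 'a) \<Rightarrow> bool" where
  "is_isomorphism f M R N S \<longleftrightarrow> is_embedding f M R N S \<and> f ` M = N"

definition isomorphic ::
  "'b set \<Rightarrow> ('b \<Rightarrow> 'b \<Rightarrow> 'a) \<Rightarrow> 'c set \<Rightarrow> ('c \<Rightarrow> 'c \<Rightarrow> 'a) \<Rightarrow> bool" where
  "isomorphic M R N S \<longleftrightarrow> (\<exists>f. is_isomorphism f M R N S)"

definition in_age ::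
  "'b set \<Rightarrow> ('b \<Rightarrow> 'b \<Rightarrow> 'a) \<Rightarrow> 'c set \<Rightarrow> ('c \<Rightarrow> 'c \<Rightarrow> 'a) \<Rightarrow> bool" where
  "in_age M R N S \<longleftrightarrow> (\<exists>N0. N0 \<subseteq> N \<and> finite N0 \<and> isomorphic M R N0 S)"

definition in_K0 :: "'a ul_alg \<Rightarrow> 'b set \<Rightarrow> ('b \<Rightarrow> 'b \<Rightarrow> 'a) \<Rightarrow> bool" where
  "in_K0 A M R \<longleftrightarrow> finite M \<and> A_structure A M R \<and>
     (\<forall>a\<in>M. ul_le A (one A) (R a a)) \<and>
     (\<forall>a\<in>M. \<forall>b\<in>M. \<forall>c\<in>M.
        ul_le A (one A) (imp A (meet A (R a b) (R b c)) (R a c)))"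

end

theory Submission
  imports Defs
begin

definition K0ax :: "'a ul_alg \<Rightarrow> 'b set \<Rightarrow> ('b \<Rightarrow> 'b \<Rightarrow> 'a) \<Rightarrow> bool" where
  "K0ax A M R \<longleftrightarrow> A_structure A M R \<and>
     (\<forall>a\<in>M. ul_le A (one A) (R a a)) \<and>
     (\<forall>a\<in>M. \<forall>b\<in>M. \<forall>c\<in>M.
        ul_le A (one A) (imp A (meet A (R a b) (R b c)) (R a c)))"

lemma in_K0_K0ax: "in_K0 A M R \<longleftrightarrow> finite M \<and> K0ax A M R"
  unfolding in_K0_def K0ax_def by blast

lemma K0ax_embed:
  assumes "is_embedding f M R N S" "K0ax A N S"
  shows "K0ax A M R"
proof -
  have fM: "\<And>x. x \<in> M \<Longrightarrow> f x \<in> N" and eq: "\<And>x y. x \<in> M \<Longrightarrow> y \<in> M \<Longrightarrow> S (f x) (f y) = R x y"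
    using assms(1) unfolding is_embedding_def by auto
  show ?thesis using assms(2) unfolding K0ax_def A_structure_def
    by (metis fM eq)
qed

lemma ul_bot_in: "UL_algebra A \<Longrightarrow> bot A \<in> carrier A"
  unfolding UL_algebra_def Let_def by blast

lemma ul_meet_bot_l: "UL_algebra A \<Longrightarrow> x \<in> carrier A \<Longrightarrow> meet A (bot A) x = bot A"
  unfolding UL_algebra_def Let_def by blast

lemma ul_meet_bot_r: "UL_algebra A \<Longrightarrow> x \<in> carrier A \<Longrightarrow> meet A x (bot A) = bot A"
  unfolding UL_algebra_def Let_def by metis

lemma ul_one_le_imp_bot:
  assumes U: "UL_algebra A" and y: "y \<in> carrier A"
  shows "ul_le A (one A) (imp A (bot A) y)"
proof -
  have b: "bot A \<in> carrier A" and o: "one A \<in> carrier A" using U unfolding UL_algebra_def Let_def by auto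
  have res: "ul_le A (fus A (bot A) (one A)) y \<longleftrightarrow> ul_le A (one A) (imp A (bot A) y)"
    using U b o y unfolding UL_algebra_def Let_def by blast
  have "fus A (bot A) (one A) = fus A (one A) (bot A)" using U b o unfolding UL_algebra_def Let_def by blast
  also have "\<dots> = bot A" using U b unfolding UL_algebra_def Let_def by blast
  finally have "ul_le A (fus A (bot A) (one A)) y" using ul_meet_bot_l[OF U y] unfolding ul_le_def by simp
  thus ?thesis using res by simp
qed

theorem proposition1:
  fixes A :: "'a ul_alg"
  assumes "UL_chain A" and "countable (carrier A)"
  shows "\<exists>(N :: nat set) S. A_structure A N S \<and>
           (\<forall>(M :: nat set) R. finite M \<and> A_structure A M R \<longrightarrow>
              (in_K0 A M R \<longleftrightarrow> in_age M R N S))"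
proof -
  have U: "UL_algebra A" using assms(1) unfolding UL_chain_def by simp
  have botC: "bot A \<in> carrier A" using ul_bot_in[OF U] .
  define enc :: "'a list list \<Rightarrow> nat \<times> (nat \<Rightarrow> nat \<Rightarrow> 'a)" where
    "enc = (\<lambda>xss. (length xss, \<lambda>x y. if x < length xss \<and> y < length xss then xss!x!y else bot A))"
  define F where "F = {p \<in> enc ` lists (lists (carrier A)). in_K0 A {0..<fst p} (snd p)}"
  have cF: "countable F" unfolding F_def
    using countable_image[OF countable_lists[OF countable_lists[OF assms(2)]], of enc]
    by (rule countable_subset[rotated]) auto
  define P where "P = from_nat_into F"
  define N where "N = {prod_encode (k,i) | k i. P k \<in> F \<and> i < fst (P k)}"
  define S where "S = (\<lambda>u v. case prod_decode u of (k,i) \<Rightarrow> case prod_decode v of (l,j) \<Rightarrow>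
                        if k = l then snd (P k) i j else bot A)"
  have PF: "\<And>k. P k \<in> F \<Longrightarrow> K0ax A {0..<fst (P k)} (snd (P k))"
    unfolding F_def in_K0_K0ax by blast
  have Senc: "S (prod_encode (k,i)) (prod_encode (l,j)) = (if k = l then snd (P k) i j else bot A)" for k i l j
    unfolding S_def by simp
  have NS: "K0ax A N S"
    unfolding K0ax_def
  proof (intro conjI ballI)
    show "A_structure A N S" unfolding A_structure_def
    proof (intro ballI)
      fix u v assume "u \<in> N" "v \<in> N"
      then obtain k i l j where u: "u = prod_encode (k,i)" "P k \<in> F" "i < fst (P k)"
        and v: "v = prod_encode (l,j)" "P l \<in> F" "j < fst (P l)" unfolding N_def by blast
      show "S u v \<in> carrier A"
        using PF[OF u(2)] u v botC unfolding K0ax_def A_structure_def by (auto simp: Senc)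
    qed
    then have SC: "\<And>u v. u \<in> N \<Longrightarrow> v \<in> N \<Longrightarrow> S u v \<in> carrier A" unfolding A_structure_def by blast
    {
      fix u assume "u \<in> N"
      then obtain k i where u: "u = prod_encode (k,i)" "P k \<in> F" "i < fst (P k)" unfolding N_def by blast
      show "ul_le A (one A) (S u u)"
        using PF[OF u(2)] u unfolding K0ax_def by (auto simp: Senc)
    }
    {
      fix u v w assume uN: "u \<in> N" and vN: "v \<in> N" and wN: "w \<in> N"
      then obtain k i l j m p where u: "u = prod_encode (k,i)" "P k \<in> F" "i < fst (P k)"
        and v: "v = prod_encode (l,j)" "P l \<in> F" "j < fst (P l)"
        and w: "w = prod_encode (m,p)" "P m \<in> F" "p < fst (P m)" unfolding N_def by blast
      show "ul_le A (one A) (imp A (meet A (S u v) (S v w)) (S u w))"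
      proof (cases "k = l \<and> l = m")
        case True
        then show ?thesis using PF[OF u(2)] u v w unfolding K0ax_def by (auto simp: Senc)
      next
        case False
        have "meet A (S u v) (S v w) = bot A"
        proof (cases "k = l")
          case True
          then have "S v w = bot A" using False v w Senc by simp
          then show ?thesis using ul_meet_bot_r[OF U SC[OF uN vN]] by simp
        next
          case False
          then have "S u v = bot A" using u v Senc by simp
          then show ?thesis using ul_meet_bot_l[OF U SC[OF vN wN]] by simp
        qed
        then show ?thesis using ul_one_le_imp_bot[OF U SC[OF uN wN]] by simp
      qed
    }
  qed
  show ?thesis
  proof (intro exI conjI allI impI)
    show "A_structure A N S" using NS unfolding K0ax_def by blast
    fix M :: "nat set" and R
    assume MR: "finite M \<and> A_structure A M R"
    show "in_K0 A M R \<longleftrightarrow> in_age M R N S"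
    proof
      assume "in_age M R N S"
      then obtain N0 f where N0: "N0 \<subseteq> N" and iso: "is_isomorphism f M R N0 S"
        unfolding in_age_def isomorphic_def by blast
      have "is_embedding f M R N S" using iso N0 unfolding is_isomorphism_def is_embedding_def by blast
      then show "in_K0 A M R" using K0ax_embed NS MR in_K0_K0ax by blast
    next
      assume K: "in_K0 A M R"
      define n where "n = card M"
      obtain h where h: "bij_betw h {0..<n} M" using ex_bij_betw_nat_finite MR n_def by blast
      define g where "g = the_inv_into {0..<n} h"
      have g: "bij_betw g M {0..<n}" unfolding g_def by (rule bij_betw_the_inv_into[OF h])
      have hg: "\<And>m. m \<in> M \<Longrightarrow> h (g m) = m" unfolding g_def using f_the_inv_into_f_bij_betw[OF h] by blast
      define f where "f = (\<lambda>x y. if x < n \<and> y < n then R (h x) (h y) else bot A)"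
      define xss where "xss = map (\<lambda>x. map (f x) [0..<n]) [0..<n]"
      have hM: "\<And>x. x < n \<Longrightarrow> h x \<in> M" using h unfolding bij_betw_def by auto
      have "xss \<in> lists (lists (carrier A))"
        using MR hM botC unfolding xss_def f_def A_structure_def by auto
      moreover have "enc xss = (n, f)"
        unfolding enc_def xss_def by (auto simp: f_def fun_eq_iff)
      moreover have "K0ax A {0..<n} f"
      proof (rule K0ax_embed)
        show "is_embedding h {0..<n} f M R"
          using h unfolding is_embedding_def bij_betw_def f_def by auto
        show "K0ax A M R" using K in_K0_K0ax by blast
      qed
      ultimately have nfF: "(n,f) \<in> F" unfolding F_def in_K0_K0ax by force
      define k where "k = to_nat_on F (n,f)"
      have Pk: "P k = (n,f)" unfolding P_def k_def using cF nfF by simp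
      define \<phi> where "\<phi> = (\<lambda>m. prod_encode (k, g m))"
      have gn: "\<And>m. m \<in> M \<Longrightarrow> g m < n" using g unfolding bij_betw_def by auto
      have "is_isomorphism \<phi> M R (\<phi> ` M) S"
        unfolding is_isomorphism_def is_embedding_def
      proof (intro conjI ballI)
        show "inj_on \<phi> M" using g unfolding bij_betw_def inj_on_def \<phi>_def
          by (metis prod.inject prod_encode_eq)
        fix x y assume "x \<in> M" "y \<in> M"
        then show "S (\<phi> x) (\<phi> y) = R x y" unfolding \<phi>_def Senc Pk f_def using gn hg by simp
      qed auto
      moreover have "\<phi> ` M \<subseteq> N" unfolding N_def \<phi>_def using Pk nfF gn by auto
      ultimately show "in_age M R N S" unfolding in_age_def isomorphic_def using MR by blast
    qed
  qed
qed

end
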